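(* Let $h\geq 3$. If there exists a $(K_2,S(C_h))$-URD$(v;r,s)$ with $s>0$, then $v\equiv 0\pmod{2h}$ and $s\equiv 0\pmod 2$.
   Context: For $h\geq 3$, an $h$-sun is the graph on $2h$ distinct vertices $a_1,\ldots,a_h,b_1,\ldots,b_h$ consisting of the $h$-cycle $(a_1,a_2,\ldots,a_h)$ together with the edges $\{a_i,b_i\}$, $i=1,\ldots,h$. A $(K_2,S(C_h))$-URD$(v;r,s)$ is a partition of the edge set of the complete graph $K_v$ into $r$ classes each of which is a 1-factor (perfect matching) of $K_v$, and $s$ classes each of which is a set of vertex-disjoint $h$-suns covering every vertex of $K_v$ exactly once. *)

theory Defs
  imports Main
begin

definition complete_edges :: "'a set \<Rightarrow> 'a set set" where
  "complete_edges V = {{x, y} | x y. x \<in> V \<and> y \<in> V \<and> x \<noteq> y}"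

definition one_factor :: "'a set \<Rightarrow> 'a set set \<Rightarrow> bool" where
  "one_factor V M \<longleftrightarrow> M \<subseteq> complete_edges V \<and> (\<forall>x\<in>V. \<exists>!e. e \<in> M \<and> x \<in> e)"

definition sun_edges :: "nat \<Rightarrow> (nat \<Rightarrow> 'a) \<Rightarrow> (nat \<Rightarrow> 'a) \<Rightarrow> 'a set set" where
  "sun_edges h a b =
     {{a i, a ((i + 1) mod h)} | i. i < h} \<union> {{a i, b i} | i. i < h}"

definition is_sun :: "nat \<Rightarrow> 'a set set \<Rightarrow> bool" where
  "is_sun h S \<longleftrightarrow> (\<exists>a b. inj_on a {..<h} \<and> inj_on b {..<h} \<and>
      a ` {..<h} \<inter> b ` {..<h} = {} \<and> S = sun_edges h a b)"

definition sun_class :: "nat \<Rightarrow> 'a set \<Rightarrow> 'a set set set \<Rightarrow> bool" where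
  "sun_class h V F \<longleftrightarrow> (\<forall>S\<in>F. is_sun h S \<and> S \<subseteq> complete_edges V) \<and>
      (\<forall>x\<in>V. \<exists>!S. S \<in> F \<and> x \<in> \<Union>S)"

text \<open>A (K_2, S(C_h))-URD(v; r, s): a partition of the edge set of K_v (vertex set
  {..<v}) into r classes M 0, ..., M (r-1) which are 1-factors and s classes
  (edge sets of) F 0, ..., F (s-1) which are sun classes.\<close>
definition URD :: "nat \<Rightarrow> nat \<Rightarrow> nat \<Rightarrow> nat \<Rightarrow> bool" where
  "URD h v r s \<longleftrightarrow> (\<exists>(M :: nat \<Rightarrow> nat set set) (F :: nat \<Rightarrow> nat set set set).
     (\<forall>i<r. one_factor {..<v} (M i)) \<and>
     (\<forall>j<s. sun_class h {..<v} (F j)) \<and>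
     (let C = (\<lambda>k. if k < r then M k else \<Union>(F (k - r))) in
        (\<forall>k<r+s. C k \<noteq> {}) \<and>
        (\<forall>e\<in>complete_edges {..<v}. \<exists>!k. k < r + s \<and> e \<in> C k)))"

end

theory Submission
  imports Defs
begin

lemma mem_sun: "e \<in> sun_edges h a b \<longleftrightarrow> (\<exists>k<h. e = {a k, a ((k+1) mod h)}) \<or> (\<exists>k<h. e = {a k, b k})"
  unfolding sun_edges_def by blast

lemma idx:
  fixes h i :: nat assumes "h \<ge> 3" "i < h"
  shows "(i+1) mod h < h" "(i+h-1) mod h < h" "(i+1) mod h \<noteq> i" "(i+h-1) mod h \<noteq> i"
    "(i+1) mod h \<noteq> (i+h-1) mod h" "((i+h-1) mod h + 1) mod h = i"
proof -
  have A: "(i+1) mod h = (if i+1 < h then i+1 else 0)" using assms by (auto simp: mod_if)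
  have B: "(i+h-1) mod h = (if i = 0 then h - 1 else i - 1)"
  proof (cases "i = 0")
    case True thus ?thesis using assms by simp
  next
    case False
    then have "i+h-1 = (i-1) + h" by simp
    then have "(i+h-1) mod h = (i-1) mod h" by simp
    then show ?thesis using False assms by simp
  qed
  show "(i+1) mod h < h" "(i+h-1) mod h < h" using assms by auto
  show "(i+1) mod h \<noteq> i" "(i+h-1) mod h \<noteq> i" "(i+1) mod h \<noteq> (i+h-1) mod h"
    using assms unfolding A B by auto
  show "((i+h-1) mod h + 1) mod h = i" unfolding B using assms by (auto simp: mod_if)
qed

locale sunl =
  fixes h :: nat and a b :: "nat \<Rightarrow> 'a"
  assumes h3: "h \<ge> 3" and ia: "inj_on a {..<h}" and ib: "inj_on b {..<h}"
    and dj: "a ` {..<h} \<inter> b ` {..<h} = {}"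
begin

lemma ab_ne: "k < h \<Longrightarrow> i < h \<Longrightarrow> a k \<noteq> b i" using dj by blast

lemma aeq: "k < h \<Longrightarrow> i < h \<Longrightarrow> a k = a i \<longleftrightarrow> k = i" using ia by (auto dest: inj_onD)
lemma beq: "k < h \<Longrightarrow> i < h \<Longrightarrow> b k = b i \<longleftrightarrow> k = i" using ib by (auto dest: inj_onD)

lemma verts: "\<Union>(sun_edges h a b) = a ` {..<h} \<union> b ` {..<h}"
proof
  show "\<Union>(sun_edges h a b) \<subseteq> a ` {..<h} \<union> b ` {..<h}"
    using idx(1)[OF h3] by (auto simp: mem_sun)
  show "a ` {..<h} \<union> b ` {..<h} \<subseteq> \<Union>(sun_edges h a b)"
  proof
    fix x assume "x \<in> a ` {..<h} \<union> b ` {..<h}"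
    then obtain k where k: "k < h" "x = a k \<or> x = b k" by auto
    then have "{a k, b k} \<in> sun_edges h a b" by (auto simp: mem_sun)
    then show "x \<in> \<Union>(sun_edges h a b)" using k by blast
  qed
qed

lemma card_verts: "card (\<Union>(sun_edges h a b)) = 2*h"
  unfolding verts using dj ia ib
  by (simp add: card_Un_disjoint card_image)

lemma deg_a:
  assumes i: "i < h"
  shows "card {e \<in> sun_edges h a b. a i \<in> e} = 3"
proof -
  let ?p = "(i+1) mod h" and ?m = "(i+h-1) mod h"
  note I = idx[OF h3 i]
  have "{e \<in> sun_edges h a b. a i \<in> e} = {{a i, a ?p}, {a ?m, a i}, {a i, b i}}"
  proof
    show "{e \<in> sun_edges h a b. a i \<in> e} \<subseteq> {{a i, a ?p}, {a ?m, a i}, {a i, b i}}"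
    proof
      fix e assume "e \<in> {e \<in> sun_edges h a b. a i \<in> e}"
      then have e: "e \<in> sun_edges h a b" "a i \<in> e" by auto
      from e(1) show "e \<in> {{a i, a ?p}, {a ?m, a i}, {a i, b i}}"
        unfolding mem_sun
      proof (elim disjE exE conjE)
        fix k assume k: "k < h" "e = {a k, a ((k + 1) mod h)}"
        have kp: "(k+1) mod h < h" using idx(1)[OF h3 k(1)] .
        from e(2) k have "a i = a k \<or> a i = a ((k+1) mod h)" by auto
        then have "i = k \<or> i = (k+1) mod h" using aeq[OF k(1) i] aeq[OF kp i] by auto
        moreover have "i = (k+1) mod h \<Longrightarrow> k = ?m"
        proof -
          assume "i = (k+1) mod h"
          then show "k = ?m" using k(1) h3 by (auto simp: mod_if split: if_splits)
        qed
        ultimately show ?thesis using k by auto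
      next
        fix k assume k: "k < h" "e = {a k, b k}"
        from e(2) k have "a i = a k" using ab_ne[OF i k(1)] by auto
        then have "k = i" using aeq[OF k(1) i] by simp
        then show ?thesis using k by auto
      qed
    qed
    show "{{a i, a ?p}, {a ?m, a i}, {a i, b i}} \<subseteq> {e \<in> sun_edges h a b. a i \<in> e}"
    proof -
      have "{a i, a ?p} \<in> sun_edges h a b" using i by (auto simp: mem_sun)
      moreover have "{a ?m, a i} \<in> sun_edges h a b"
        unfolding mem_sun using I(2) I(6) by metis
      moreover have "{a i, b i} \<in> sun_edges h a b" using i by (auto simp: mem_sun)
      ultimately show ?thesis by auto
    qed
  qed
  moreover have "a i \<noteq> a ?p" "a ?m \<noteq> a i" "a ?p \<noteq> a ?m"
    using aeq[OF I(1) i] aeq[OF I(2) i] aeq[OF I(1) I(2)] I by auto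
  moreover have "b i \<noteq> a i" "b i \<noteq> a ?p" "b i \<noteq> a ?m"
    using ab_ne[OF i i] ab_ne[OF I(1) i] ab_ne[OF I(2) i] by auto
  ultimately show ?thesis by (auto simp: doubleton_eq_iff card_insert_if)
qed

lemma deg_b:
  assumes i: "i < h"
  shows "card {e \<in> sun_edges h a b. b i \<in> e} = 1"
proof -
  have "{e \<in> sun_edges h a b. b i \<in> e} = {{a i, b i}}"
  proof
    show "{e \<in> sun_edges h a b. b i \<in> e} \<subseteq> {{a i, b i}}"
    proof
      fix e assume "e \<in> {e \<in> sun_edges h a b. b i \<in> e}"
      then have e: "e \<in> sun_edges h a b" "b i \<in> e" by auto
      from e(1) show "e \<in> {{a i, b i}}"
        unfolding mem_sun
      proof (elim disjE exE conjE)
        fix k assume k: "k < h" "e = {a k, a ((k + 1) mod h)}"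
        then show ?thesis using e(2) ab_ne[OF k(1) i] ab_ne[OF idx(1)[OF h3 k(1)] i] by auto
      next
        fix k assume k: "k < h" "e = {a k, b k}"
        from e(2) k have "b i = b k" using ab_ne[OF k(1) i] by auto
        then have "k = i" using beq[OF k(1) i] by simp
        then show ?thesis using k by auto
      qed
    qed
    show "{{a i, b i}} \<subseteq> {e \<in> sun_edges h a b. b i \<in> e}" using i by (auto simp: mem_sun)
  qed
  then show ?thesis by simp
qed

lemma deg_odd: "x \<in> \<Union>(sun_edges h a b) \<Longrightarrow> card {e \<in> sun_edges h a b. x \<in> e} \<in> {1,3}"
  unfolding verts using deg_a deg_b by auto

lemma deg_sum: "(\<Sum>x\<in>\<Union>(sun_edges h a b). card {e \<in> sun_edges h a b. x \<in> e}) = 2 * card (\<Union>(sun_edges h a b))"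
proof -
  have "(\<Sum>x\<in>\<Union>(sun_edges h a b). card {e \<in> sun_edges h a b. x \<in> e})
      = (\<Sum>x\<in>a ` {..<h}. card {e \<in> sun_edges h a b. x \<in> e}) + (\<Sum>x\<in>b ` {..<h}. card {e \<in> sun_edges h a b. x \<in> e})"
    unfolding verts using dj by (simp add: sum.union_disjoint)
  also have "\<dots> = (\<Sum>i<h. card {e \<in> sun_edges h a b. a i \<in> e}) + (\<Sum>i<h. card {e \<in> sun_edges h a b. b i \<in> e})"
    using ia ib by (simp add: sum.reindex)
  also have "\<dots> = 3*h + h" using deg_a deg_b by simp
  finally show ?thesis using card_verts by simp
qed

end

lemma is_sun_D:
  assumes "h \<ge> 3" "is_sun h S"
  obtains a b where "sunl h a b" "S = sun_edges h a b"
  using assms unfolding is_sun_def sunl_def by blast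

lemma ce_sub: "\<Union>(complete_edges V) \<subseteq> V"
  unfolding complete_edges_def by auto

lemma ce_fin: "finite V \<Longrightarrow> finite (complete_edges V)"
proof -
  assume "finite V"
  moreover have "complete_edges V \<subseteq> Pow V" unfolding complete_edges_def by auto
  ultimately show ?thesis using finite_subset by blast
qed

lemma odd_sum:
  fixes f :: "nat \<Rightarrow> nat"
  shows "(\<forall>j<s. f j \<in> {1,3}) \<Longrightarrow> \<exists>c. (\<Sum>j<s. f j) = s + 2*c"
proof (induction s)
  case 0 then show ?case by simp
next
  case (Suc s)
  then obtain c where c: "(\<Sum>j<s. f j) = s + 2*c" by auto
  have "f s \<in> {1,3}" using Suc.prems by auto
  then show ?case
  proof
    assume "f s = 1" then show ?thesis using c by (intro exI[of _ c]) simp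
  next
    assume "f s \<in> {3}" then show ?thesis using c by (intro exI[of _ "c+1"]) simp
  qed
qed

lemma sum_split: "(\<Sum>k<r+s. g k) = (\<Sum>k<r. g k) + (\<Sum>j<s. g (r+j))" for g :: "nat \<Rightarrow> nat"
  by (induction s) auto

lemma star_card: "x \<in> V \<Longrightarrow> finite V \<Longrightarrow> card {e \<in> complete_edges V. x \<in> e} = card V - 1"
proof -
  assume x: "x \<in> V" and f: "finite V"
  have "{e \<in> complete_edges V. x \<in> e} = (\<lambda>y. {x,y}) ` (V - {x})"
    unfolding complete_edges_def using x by (auto simp: insert_commute)
  moreover have "inj_on (\<lambda>y. {x,y}) (V - {x})" by (auto simp: inj_on_def doubleton_eq_iff)
  ultimately show ?thesis using x f by (simp add: card_image)
qed

lemma class_facts: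
  assumes h3: "h \<ge> 3" and sc: "sun_class h V F" and fV: "finite V"
  shows "finite F" "card V = 2*h*card F"
    "\<And>x. x \<in> V \<Longrightarrow> card {e\<in>\<Union>F. x \<in> e} \<in> {1,3}"
    "(\<Sum>x\<in>V. card {e\<in>\<Union>F. x \<in> e}) = 2 * card V"
proof -
  have sub: "\<And>S. S \<in> F \<Longrightarrow> S \<subseteq> complete_edges V" and sun: "\<And>S. S \<in> F \<Longrightarrow> is_sun h S"
    and uq: "\<And>x. x \<in> V \<Longrightarrow> \<exists>!S. S \<in> F \<and> x \<in> \<Union>S"
  proof -
    have A: "\<forall>S\<in>F. is_sun h S \<and> S \<subseteq> complete_edges V" using sc unfolding sun_class_def by (rule conjunct1)
    have B: "\<forall>x\<in>V. \<exists>!S. S \<in> F \<and> x \<in> \<Union>S" using sc unfolding sun_class_def by (rule conjunct2)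
    show "\<And>S. S \<in> F \<Longrightarrow> S \<subseteq> complete_edges V" "\<And>S. S \<in> F \<Longrightarrow> is_sun h S"
      "\<And>x. x \<in> V \<Longrightarrow> \<exists>!S. S \<in> F \<and> x \<in> \<Union>S" using A B by simp_all
  qed
  have vs: "\<And>S. S \<in> F \<Longrightarrow> \<Union>S \<subseteq> V" using Union_mono[OF sub] ce_sub by (rule subset_trans)
  show fF: "finite F"
  proof -
    have "F \<subseteq> Pow (complete_edges V)" using sub by auto
    moreover have "finite (Pow (complete_edges V))" using ce_fin[OF fV] by simp
    ultimately show ?thesis by (rule finite_subset)
  qed
  have VU: "V = (\<Union>S\<in>F. \<Union>S)"
  proof
    show "V \<subseteq> (\<Union>S\<in>F. \<Union>S)"
    proof
      fix x assume "x \<in> V"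
      from uq[OF this] obtain S where "S \<in> F" "x \<in> \<Union>S" by (elim ex1E) blast
      then show "x \<in> (\<Union>S\<in>F. \<Union>S)" by blast
    qed
    show "(\<Union>S\<in>F. \<Union>S) \<subseteq> V" using vs by blast
  qed
  have djS: "\<And>S S' x. S \<in> F \<Longrightarrow> S' \<in> F \<Longrightarrow> x \<in> \<Union>S \<Longrightarrow> x \<in> \<Union>S' \<Longrightarrow> S = S'"
  proof -
    fix S S' x assume a: "S \<in> F" "S' \<in> F" "x \<in> \<Union>S" "x \<in> \<Union>S'"
    then have "x \<in> V" using vs by blast
    from uq[OF this] obtain T where "\<forall>U. U \<in> F \<and> x \<in> \<Union>U \<longrightarrow> U = T" by (elim ex1E) blast
    then show "S = S'" using a by metis
  qed
  have cv: "\<And>S. S \<in> F \<Longrightarrow> card (\<Union>S) = 2*h"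
  proof -
    fix S assume S: "S \<in> F"
    obtain a b where ab: "sunl h a b" "S = sun_edges h a b" using is_sun_D[OF h3 sun[OF S]] by blast
    show "card (\<Union>S) = 2*h" using sunl.card_verts[OF ab(1)] ab(2) by simp
  qed
  have fS: "\<And>S. S \<in> F \<Longrightarrow> finite (\<Union>S)" using finite_subset[OF vs fV] .
  have cV: "card V = (\<Sum>S\<in>F. card (\<Union>S))"
    apply (subst VU) apply (rule card_UN_disjoint[OF fF])
    using fS djS by blast+
  have "\<dots> = (\<Sum>S\<in>F. 2*h)" using cv by simp
  then show "card V = 2*h*card F" using cV by simp
  have loc: "\<And>S x. S \<in> F \<Longrightarrow> x \<in> \<Union>S \<Longrightarrow> {e\<in>\<Union>F. x \<in> e} = {e\<in>S. x \<in> e}"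
  proof -
    fix S x assume a: "S \<in> F" "x \<in> \<Union>S"
    show "{e\<in>\<Union>F. x \<in> e} = {e\<in>S. x \<in> e}"
    proof
      show "{e\<in>\<Union>F. x \<in> e} \<subseteq> {e\<in>S. x \<in> e}"
      proof
        fix e assume "e \<in> {e\<in>\<Union>F. x \<in> e}"
        then obtain S' where "S' \<in> F" "e \<in> S'" "x \<in> e" by blast
        moreover then have "S' = S" using djS[of S' S x] a by blast
        ultimately show "e \<in> {e\<in>S. x \<in> e}" by blast
      qed
    qed (use a in blast)
  qed
  show "\<And>x. x \<in> V \<Longrightarrow> card {e\<in>\<Union>F. x \<in> e} \<in> {1,3}"
  proof -
    fix x assume "x \<in> V"
    from uq[OF this] obtain S where S: "S \<in> F" "x \<in> \<Union>S" by (elim ex1E) blast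
    obtain a b where ab: "sunl h a b" "S = sun_edges h a b" using is_sun_D[OF h3 sun[OF S(1)]] by blast
    show "card {e\<in>\<Union>F. x \<in> e} \<in> {1,3}" unfolding loc[OF S] using sunl.deg_odd[OF ab(1)] S ab(2) by simp
  qed
  have "(\<Sum>x\<in>V. card {e\<in>\<Union>F. x \<in> e}) = (\<Sum>S\<in>F. \<Sum>x\<in>\<Union>S. card {e\<in>\<Union>F. x \<in> e})"
    apply (subst VU) apply (rule sum.UNION_disjoint[OF fF])
    using fS djS by blast+
  also have "\<dots> = (\<Sum>S\<in>F. \<Sum>x\<in>\<Union>S. card {e\<in>S. x \<in> e})"
  proof (rule sum.cong[OF refl], rule sum.cong[OF refl])
    fix S x assume "S \<in> F" "x \<in> \<Union>S"
    then show "card {e\<in>\<Union>F. x \<in> e} = card {e\<in>S. x \<in> e}" using loc by metis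
  qed
  also have "\<dots> = (\<Sum>S\<in>F. 2 * card (\<Union>S))"
  proof (rule sum.cong[OF refl])
    fix S assume S: "S \<in> F"
    obtain a b where ab: "sunl h a b" "S = sun_edges h a b" using is_sun_D[OF h3 sun[OF S]] by blast
    show "(\<Sum>x\<in>\<Union>S. card {e\<in>S. x \<in> e}) = 2 * card (\<Union>S)" using sunl.deg_sum[OF ab(1)] ab(2) by simp
  qed
  also have "\<dots> = 2 * card V" using cV by (simp add: sum_distrib_left)
  finally show "(\<Sum>x\<in>V. card {e\<in>\<Union>F. x \<in> e}) = 2 * card V" .
qed

theorem lemma2p1:
  fixes h v r s :: nat
  assumes "h \<ge> 3" and "URD h v r s" and "s > 0"
  shows "v mod (2 * h) = 0 \<and> even s"
proof -
  let ?V = "{..<v}"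
  obtain M F where M: "\<forall>i<r. one_factor ?V (M i)" and F: "\<forall>j<s. sun_class h ?V (F j)"
    and ne0: "\<forall>k<r+s. (\<lambda>k. if k < r then M k else \<Union>(F (k - r))) k \<noteq> {}"
    and part0: "\<forall>e\<in>complete_edges ?V. \<exists>!k. k < r + s \<and> e \<in> (\<lambda>k. if k < r then M k else \<Union>(F (k - r))) k"
    using assms(2) unfolding URD_def Let_def by (elim exE conjE) (rule that)
  define C where "C = (\<lambda>k. if k < r then M k else \<Union>(F (k - r)))"
  have ne: "\<forall>k<r+s. C k \<noteq> {}" and part: "\<forall>e\<in>complete_edges ?V. \<exists>!k. k < r + s \<and> e \<in> C k"
    unfolding C_def by (rule ne0, rule part0)
  have Csub: "\<And>k. k < r+s \<Longrightarrow> C k \<subseteq> complete_edges ?V"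
  proof -
    fix k assume k: "k < r+s"
    show "C k \<subseteq> complete_edges ?V"
    proof (cases "k < r")
      case True
      then have "one_factor ?V (M k)" using M by blast
      then have "M k \<subseteq> complete_edges ?V" unfolding one_factor_def by (rule conjunct1)
      then show ?thesis using True unfolding C_def by simp
    next
      case False
      then have "k - r < s" using k by simp
      then have "sun_class h ?V (F (k-r))" using F by blast
      then have "\<forall>S\<in>F (k-r). is_sun h S \<and> S \<subseteq> complete_edges ?V" unfolding sun_class_def by (rule conjunct1)
      then show ?thesis using False unfolding C_def by auto
    qed
  qed
  define d where "d k x = card {e \<in> C k. x \<in> e}" for k x
  have F0: "sun_class h ?V (F 0)" using F assms(3) by auto
  have cf: "\<And>j. j < s \<Longrightarrow> card ?V = 2*h*card (F j)" using class_facts(2)[OF assms(1) F[rule_format] finite_lessThan] by simp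
  have mod: "v mod (2*h) = 0" using cf[OF assms(3)] by simp
  have "C r \<noteq> {}" using ne assms(3) by auto
  then obtain e where "e \<in> C r" by auto
  then have "e \<in> complete_edges ?V" using Csub[of r] assms(3) by auto
  then have vpos: "v > 0" unfolding complete_edges_def by auto
  have loc: "\<And>x. x < v \<Longrightarrow> v - 1 = (\<Sum>k<r+s. d k x)"
  proof -
    fix x assume x: "x < v"
    have "{e \<in> complete_edges ?V. x \<in> e} = (\<Union>k\<in>{..<r+s}. {e \<in> C k. x \<in> e})"
    proof
      show "{e \<in> complete_edges ?V. x \<in> e} \<subseteq> (\<Union>k\<in>{..<r+s}. {e \<in> C k. x \<in> e})"
      proof
        fix e assume "e \<in> {e \<in> complete_edges ?V. x \<in> e}"
        then have "e \<in> complete_edges ?V" "x \<in> e" by auto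
        then obtain k where "k < r+s" "e \<in> C k" using part by blast
        then show "e \<in> (\<Union>k\<in>{..<r+s}. {e \<in> C k. x \<in> e})" using \<open>x \<in> e\<close> by auto
      qed
      show "(\<Union>k\<in>{..<r+s}. {e \<in> C k. x \<in> e}) \<subseteq> {e \<in> complete_edges ?V. x \<in> e}"
        using Csub by auto
    qed
    moreover have "card (\<Union>k\<in>{..<r+s}. {e \<in> C k. x \<in> e}) = (\<Sum>k<r+s. d k x)"
      unfolding d_def
    proof (rule card_UN_disjoint)
      show "\<forall>i\<in>{..<r+s}. finite {e \<in> C i. x \<in> e}"
      proof
        fix i assume "i \<in> {..<r+s}"
        then have "{e \<in> C i. x \<in> e} \<subseteq> complete_edges ?V" using Csub by auto
        moreover have "finite (complete_edges ?V)" using ce_fin[of ?V] by simp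
        ultimately show "finite {e \<in> C i. x \<in> e}" by (rule finite_subset)
      qed
      show "\<forall>i\<in>{..<r+s}. \<forall>j\<in>{..<r+s}. i \<noteq> j \<longrightarrow> {e \<in> C i. x \<in> e} \<inter> {e \<in> C j. x \<in> e} = {}"
      proof (intro ballI impI)
        fix i j assume i: "i \<in> {..<r+s}" and j: "j \<in> {..<r+s}" and ij: "i \<noteq> j"
        show "{e \<in> C i. x \<in> e} \<inter> {e \<in> C j. x \<in> e} = {}"
        proof (rule ccontr)
          assume "{e \<in> C i. x \<in> e} \<inter> {e \<in> C j. x \<in> e} \<noteq> {}"
          then obtain e where e: "e \<in> C i" "e \<in> C j" by blast
          then have "e \<in> complete_edges ?V" using Csub i by auto
          then have "\<exists>!k. k < r + s \<and> e \<in> C k" using part by blast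
          then show False using e i j ij by auto
        qed
      qed
    qed simp
    ultimately show "v - 1 = (\<Sum>k<r+s. d k x)" using star_card[of x ?V] x by simp
  qed
  have dM: "\<And>k x. k < r \<Longrightarrow> x < v \<Longrightarrow> d k x = 1"
  proof -
    fix k x assume k: "k < r" and x: "x < v"
    have "one_factor ?V (M k)" using M k by simp
    then have "\<forall>x\<in>?V. \<exists>!e. e \<in> M k \<and> x \<in> e" unfolding one_factor_def by (rule conjunct2)
    then have "\<exists>!e. e \<in> M k \<and> x \<in> e" using x by simp
    then obtain e where e1: "e \<in> M k \<and> x \<in> e" and e2: "\<forall>e'. e' \<in> M k \<and> x \<in> e' \<longrightarrow> e' = e" by (elim ex1E) blast
    have "{e' \<in> M k. x \<in> e'} = {e}"
    proof
      show "{e' \<in> M k. x \<in> e'} \<subseteq> {e}" using e2 by blast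
      show "{e} \<subseteq> {e' \<in> M k. x \<in> e'}" using e1 by blast
    qed
    then show "d k x = 1" unfolding d_def C_def using k by simp
  qed
  have dF: "\<And>j x. j < s \<Longrightarrow> x < v \<Longrightarrow> d (r+j) x \<in> {1,3}"
    unfolding d_def C_def using class_facts(3)[OF assms(1) F[rule_format] finite_lessThan] by simp
  have dS: "\<And>j. j < s \<Longrightarrow> (\<Sum>x<v. d (r+j) x) = 2*v"
    unfolding d_def C_def using class_facts(4)[OF assms(1) F[rule_format] finite_lessThan] by simp
  have "v * (v - 1) = (\<Sum>x<v. v - 1)" by simp
  also have "\<dots> = (\<Sum>x<v. \<Sum>k<r+s. d k x)"
    by (rule sum.cong[OF refl]) (rule loc, simp)
  also have "\<dots> = (\<Sum>k<r+s. \<Sum>x<v. d k x)" by (rule sum.swap)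
  also have "\<dots> = (\<Sum>k<r. \<Sum>x<v. d k x) + (\<Sum>j<s. \<Sum>x<v. d (r+j) x)" by (rule sum_split)
  also have "\<dots> = (\<Sum>k<r. \<Sum>x<v. 1) + (\<Sum>j<s. 2*v)"
  proof -
    have "(\<Sum>k<r. \<Sum>x<v. d k x) = (\<Sum>k<r. \<Sum>x<v. 1)"
      by (rule sum.cong[OF refl], rule sum.cong[OF refl]) (rule dM, simp, simp)
    moreover have "(\<Sum>j<s. \<Sum>x<v. d (r+j) x) = (\<Sum>j<s. 2*v)"
      by (rule sum.cong[OF refl]) (rule dS, simp)
    ultimately show ?thesis by simp
  qed
  also have "\<dots> = v * (r + 2*s)" by (simp add: algebra_simps)
  finally have "v * (v - 1) = v * (r + 2*s)" .
  then have G: "v - 1 = r + 2*s" using vpos by simp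
  have "v - 1 = (\<Sum>k<r+s. d k 0)" using loc[OF vpos] .
  also have "\<dots> = (\<Sum>k<r. d k 0) + (\<Sum>j<s. d (r+j) 0)" by (rule sum_split)
  also have "(\<Sum>k<r. d k 0) = (\<Sum>k<r. 1)"
    by (rule sum.cong[OF refl]) (rule dM, simp, rule vpos)
  finally have "(\<Sum>j<s. d (r+j) 0) = 2*s" using G by simp
  moreover have "\<forall>j<s. d (r+j) 0 \<in> {1,3}" using dF vpos by blast
  then obtain c where "(\<Sum>j<s. d (r+j) 0) = s + 2*c" using odd_sum[of s "\<lambda>j. d (r+j) 0"] by blast
  ultimately have "s = 2*c" by simp
  then show ?thesis using mod by simp
qed

end
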